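(* Let $T=\{0,\dots,N\}$ and $\mathbb{F}$ a field. Let $C_\bullet$, $C'_\bullet$ be filtrations of finite-dimensional chain complexes $C$, $C'$ over $\mathbb{F}$ with filtration compatible ordered bases $\mathfrak{C}=(c_1,\dots,c_n)$, $\mathfrak{C}'=(c'_1,\dots,c'_n)$ and filtration boundary matrices $D$, $D'$. Let $\varphi_\bullet\colon C_\bullet\to C'_\bullet$ be an injective morphism of filtrations of chain complexes with $\varphi=\varphi_N\colon C\to C'$ an isomorphism, $F$ its matrix with respect to $\mathfrak{C},\mathfrak{C}'$, and $D^{\varphi}=DF^{-1}=F^{-1}D'$. Let $V^{\varphi}$ be an invertible upper-triangular matrix such that $R^{\varphi}=D^{\varphi}V^{\varphi}$ is reduced; interpret columns of $R^{\varphi}$ as coordinate vectors with respect to $\mathfrak{C}$ and columns of $V^\varphi$ and of $FR^{\varphi}$ as coordinate vectors (elements of $C'$) with respect to $\mathfrak{C}'$. Then the family $\operatorname{cols}FR^{\varphi}$ of nonzero columns of $FR^{\varphi}$ is a filtration compatible basis for the filtration $B_*(C'_\bullet)$, $t\mapsto\partial(C'_t)$, and for all $j$ with $r^{\varphi}_j\neq 0$, \[ \operatorname{supp}_{B_*(C'_\bullet)}(Fr^{\varphi}_j)=\operatorname{supp}_{C'_\bullet}(v^{\varphi}_j). \]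
   Context: A chain complex is a finite-dimensional graded vector space with differential $\partial$ of degree $-1$, $\partial^2=0$; a filtration of chain complexes is a chain of subcomplexes $C_0\subseteq\dots\subseteq C_N=C$. Support: $\operatorname{supp}_{M_\bullet}(m)=\{t\mid m\in M_t\}$. A basis $\mathfrak{M}$ of $M_N$ is filtration compatible if $\mathfrak{M}\cap M_t$ is a basis of $M_t$ for all $t$; an ordered such basis is a filtration compatible ordered basis if $m\le m'$ implies $\operatorname{supp}(m')\subseteq\operatorname{supp}(m)$. The filtration boundary matrix is the matrix of $\partial$ in that basis. For a matrix $X$, $x_j$ is its $j$-th column, $\operatorname{cols}X$ the family of its nonzero columns; $\operatorname{piv}x_j$ is the largest row index of a nonzero entry of a nonzero column; $X$ is reduced if no two nonzero columns have the same pivot. *)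

theory Defs
  imports "Jordan_Normal_Form.Matrix"
begin

text \<open>Coordinate model: a chain complex C with ordered basis (c_1,...,c_n) is identified
  with 'a^n (type 'a vec of dimension n) via the basis, so c_i is unit_vec n (i-1)
  (indices are 0-based here), and the differential is multiplication by the boundary
  matrix D.\<close>

definition lin_comb :: "nat \<Rightarrow> ('i \<Rightarrow> 'a::field vec) \<Rightarrow> 'i set \<Rightarrow> ('i \<Rightarrow> 'a) \<Rightarrow> 'a vec" where
  "lin_comb n v J c = finsum_vec TYPE('a) n (\<lambda>j. c j \<cdot>\<^sub>v v j) J"

definition family_basis :: "nat \<Rightarrow> 'a::field vec set \<Rightarrow> ('i \<Rightarrow> 'a vec) \<Rightarrow> 'i set \<Rightarrow> bool" where
  "family_basis n W v J \<longleftrightarrow> finite J \<and> (\<forall>j\<in>J. v j \<in> W)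
     \<and> (\<forall>c. lin_comb n v J c = 0\<^sub>v n \<longrightarrow> (\<forall>j\<in>J. c j = 0))
     \<and> (\<forall>w\<in>W. \<exists>c. w = lin_comb n v J c)"

definition is_subspace :: "nat \<Rightarrow> 'a::field vec set \<Rightarrow> bool" where
  "is_subspace n W \<longleftrightarrow> W \<subseteq> carrier_vec n \<and> 0\<^sub>v n \<in> W
     \<and> (\<forall>x\<in>W. \<forall>y\<in>W. x + y \<in> W) \<and> (\<forall>a. \<forall>x\<in>W. a \<cdot>\<^sub>v x \<in> W)"

definition chain_complex_mat :: "nat \<Rightarrow> 'a::field mat \<Rightarrow> bool" where
  "chain_complex_mat n D \<longleftrightarrow> D \<in> carrier_mat n n \<and> D * D = 0\<^sub>m n n"

definition filtration_cc :: "nat \<Rightarrow> nat \<Rightarrow> 'a::field mat \<Rightarrow> (nat \<Rightarrow> 'a vec set) \<Rightarrow> bool" where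
  "filtration_cc n N D Cf \<longleftrightarrow> chain_complex_mat n D
     \<and> (\<forall>t\<le>N. is_subspace n (Cf t) \<and> (\<forall>x\<in>Cf t. D *\<^sub>v x \<in> Cf t))
     \<and> (\<forall>t<N. Cf t \<subseteq> Cf (Suc t))
     \<and> Cf N = carrier_vec n"

definition supp :: "nat \<Rightarrow> (nat \<Rightarrow> 'a vec set) \<Rightarrow> 'a vec \<Rightarrow> nat set" where
  "supp N Mf m = {t. t \<le> N \<and> m \<in> Mf t}"

definition filt_compatible_basis :: "nat \<Rightarrow> nat \<Rightarrow> (nat \<Rightarrow> 'a::field vec set) \<Rightarrow> ('i \<Rightarrow> 'a vec) \<Rightarrow> 'i set \<Rightarrow> bool" where
  "filt_compatible_basis n N Mf v J \<longleftrightarrow>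
     (\<forall>t\<le>N. family_basis n (Mf t) v {j\<in>J. v j \<in> Mf t})"

definition filt_compatible_ordered_std_basis :: "nat \<Rightarrow> nat \<Rightarrow> (nat \<Rightarrow> 'a::field vec set) \<Rightarrow> bool" where
  "filt_compatible_ordered_std_basis n N Mf \<longleftrightarrow>
     filt_compatible_basis n N Mf (unit_vec n) {..<n}
     \<and> (\<forall>i i'. i \<le> i' \<and> i' < n \<longrightarrow> supp N Mf (unit_vec n i') \<subseteq> supp N Mf (unit_vec n i))"

definition piv :: "'a::zero vec \<Rightarrow> nat" where
  "piv x = (GREATEST i. i < dim_vec x \<and> x $ i \<noteq> 0)"

definition reduced :: "'a::zero mat \<Rightarrow> bool" where
  "reduced R \<longleftrightarrow> (\<forall>j<dim_col R. \<forall>j'<dim_col R. j \<noteq> j' \<and> col R j \<noteq> 0\<^sub>v (dim_row R)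
      \<and> col R j' \<noteq> 0\<^sub>v (dim_row R) \<longrightarrow> piv (col R j) \<noteq> piv (col R j'))"

end

theory Submission imports Defs "Jordan_Normal_Form.Determinant"
begin

lemma lin_comb_carrier:
  assumes "finite J" "\<And>j. j \<in> J \<Longrightarrow> v j \<in> carrier_vec n"
  shows "lin_comb n v J c \<in> carrier_vec n"
  unfolding lin_comb_def by (rule finsum_vec_closed) (use assms in auto)

lemma lin_comb_index:
  assumes "finite J" "\<And>j. j \<in> J \<Longrightarrow> v j \<in> carrier_vec n" "i < n"
  shows "lin_comb n v J c $ i = (\<Sum>j\<in>J. c j * v j $ i)"
  unfolding lin_comb_def using assms
  by (subst index_finsum_vec) (auto intro!: sum.cong, metis carrier_vecD index_smult_vec(1))

lemma lin_comb_subspace: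
  assumes W: "is_subspace n W" and "finite J" and "\<forall>j\<in>J. v j \<in> W"
  shows "lin_comb n v J c \<in> W"
  using assms(2,3)
proof (induction J rule: finite_induct)
  case empty
  then show ?case using W unfolding lin_comb_def is_subspace_def by (simp add: finsum_vec_empty)
next
  case (insert j J)
  have WC: "W \<subseteq> carrier_vec n" using W unfolding is_subspace_def by auto
  have c1: "(\<lambda>j. c j \<cdot>\<^sub>v v j) \<in> J \<rightarrow> carrier_vec n" using insert WC by auto
  have c2: "c j \<cdot>\<^sub>v v j \<in> carrier_vec n" using insert WC by auto
  have "lin_comb n v (insert j J) c = c j \<cdot>\<^sub>v v j + lin_comb n v J c"
    unfolding lin_comb_def by (rule finsum_vec_insert[OF insert(1,2) c1 c2])
  moreover have "c j \<cdot>\<^sub>v v j \<in> W" using W insert unfolding is_subspace_def by auto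
  ultimately show ?case using W insert unfolding is_subspace_def by auto
qed

lemma inv_obtain:
  fixes V :: "'a::field mat"
  assumes "V \<in> carrier_mat n n" "invertible_mat V"
  obtains W where "W \<in> carrier_mat n n" "V * W = 1\<^sub>m n" "W * V = 1\<^sub>m n"
proof -
  obtain W where "inverts_mat V W" "inverts_mat W V" using assms unfolding invertible_mat_def by auto
  then have a: "V * W = 1\<^sub>m n" "W * V = 1\<^sub>m (dim_row W)" using assms unfolding inverts_mat_def by auto
  then have "dim_col W = n" "dim_row W = n"
    using assms by (metis dim_col_mat(1) index_mult_mat(3) index_one_mat(3),
       metis a(2) assms(1) carrier_matD(2) index_mult_mat(3) index_one_mat(3))
  then show ?thesis using a that by auto
qed

lemma diag_nonzero:
  fixes V :: "'a::field mat"
  assumes V: "V \<in> carrier_mat n n" "invertible_mat V" "upper_triangular V" and j: "j < n"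
  shows "V $$ (j,j) \<noteq> 0"
proof -
  obtain W where W: "W \<in> carrier_mat n n" "V * W = 1\<^sub>m n" using inv_obtain V by metis
  have "det V * det W = 1" using det_mult[OF V(1) W(1)] W by simp
  then have "det V \<noteq> 0" by auto
  then have "prod_list (diag_mat V) \<noteq> 0" using det_upper_triangular[OF V(3) V(1)] by simp
  then have "0 \<notin> set (diag_mat V)" by (simp add: prod_list_zero_iff)
  then show ?thesis using j V(1) unfolding diag_mat_def by auto
qed

lemma piv_props:
  fixes x :: "'a::zero vec"
  assumes "x \<noteq> 0\<^sub>v (dim_vec x)"
  shows "piv x < dim_vec x" "x $ piv x \<noteq> 0" "\<And>i. i < dim_vec x \<Longrightarrow> x $ i \<noteq> 0 \<Longrightarrow> i \<le> piv x"
proof -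
  obtain k where k: "k < dim_vec x" "x $ k \<noteq> 0" using assms by (metis eq_vecI index_zero_vec(1,2))
  have b: "\<forall>y. y < dim_vec x \<and> x $ y \<noteq> 0 \<longrightarrow> y \<le> dim_vec x" by auto
  have "piv x < dim_vec x \<and> x $ piv x \<noteq> 0" unfolding piv_def
    by (rule GreatestI_nat[of _ k "dim_vec x"]) (use k in auto)
  then show "piv x < dim_vec x" "x $ piv x \<noteq> 0" by auto
  show "\<And>i. i < dim_vec x \<Longrightarrow> x $ i \<noteq> 0 \<Longrightarrow> i \<le> piv x" unfolding piv_def
    by (rule Greatest_le_nat[of _ _ "dim_vec x"]) auto
qed


theorem lemma3p7:
  fixes n N :: nat
    and D D' F Finv V :: "'a::field mat"
    and Cf Cf' :: "nat \<Rightarrow> 'a vec set"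
  assumes filtC: "filtration_cc n N D Cf"
    and filtC': "filtration_cc n N D' Cf'"
    and basC: "filt_compatible_ordered_std_basis n N Cf"
    and basC': "filt_compatible_ordered_std_basis n N Cf'"
    and F_carrier: "F \<in> carrier_mat n n"
    and F_chain: "F * D = D' * F"
    and F_filt: "\<forall>t\<le>N. \<forall>x\<in>Cf t. F *\<^sub>v x \<in> Cf' t"
    and F_inj: "\<forall>t\<le>N. inj_on (\<lambda>x. F *\<^sub>v x) (Cf t)"
    and F_iso: "invertible_mat F"
    and Finv: "Finv \<in> carrier_mat n n" "F * Finv = 1\<^sub>m n" "Finv * F = 1\<^sub>m n"
    and V: "V \<in> carrier_mat n n" "invertible_mat V" "upper_triangular V"
    and red: "reduced ((D * Finv) * V)"
  shows "filt_compatible_basis n N (\<lambda>t. (\<lambda>x. D' *\<^sub>v x) ` Cf' t)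
           (\<lambda>j. col (F * ((D * Finv) * V)) j) {j. j < n \<and> col ((D * Finv) * V) j \<noteq> 0\<^sub>v n}
      \<and> (\<forall>j<n. col ((D * Finv) * V) j \<noteq> 0\<^sub>v n \<longrightarrow>
           supp N (\<lambda>t. (\<lambda>x. D' *\<^sub>v x) ` Cf' t) (col (F * ((D * Finv) * V)) j)
             = supp N Cf' (col V j))"
proof -
  have Dc: "D \<in> carrier_mat n n" using filtC unfolding filtration_cc_def chain_complex_mat_def by auto
  have D'c: "D' \<in> carrier_mat n n" using filtC' unfolding filtration_cc_def chain_complex_mat_def by auto
  let ?R = "(D * Finv) * V"
  have Rc: "?R \<in> carrier_mat n n" using Dc Finv V by auto
  have "F * ?R = F * (D * Finv) * V" using F_carrier Dc Finv V
    by (metis assoc_mult_mat mult_carrier_mat)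
  also have "F * (D * Finv) = (F * D) * Finv" using F_carrier Dc Finv by (metis assoc_mult_mat)
  also have "\<dots> = D' * (F * Finv)" using F_chain F_carrier D'c Finv by (metis assoc_mult_mat)
  also have "\<dots> = D'" using Finv D'c by auto
  finally have FR: "F * ?R = D' * V" .
  have "Finv * (D' * V) = Finv * (F * ?R)" using FR by simp
  also have "\<dots> = (Finv * F) * ?R" using Finv F_carrier Rc by (metis assoc_mult_mat)
  also have "\<dots> = ?R" using Finv Rc by auto
  finally have RF: "?R = Finv * (D' * V)" by simp
  define w where "w j = col (D' * V) j" for j
  define r where "r j = col ?R j" for j
  have wc: "w j \<in> carrier_vec n" for j using D'c V unfolding w_def carrier_vec_def by auto
  have rc: "r j \<in> carrier_vec n" for j using Rc unfolding r_def carrier_vec_def by auto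
  have w_eq: "w j = D' *\<^sub>v col V j" if "j < n" for j unfolding w_def using D'c V that by auto
  have r_eq: "r j = Finv *\<^sub>v w j" if "j < n" for j unfolding r_def w_def using RF Finv D'c V that
    by (metis col_mult2 mult_carrier_mat)
  have w_r: "w j = F *\<^sub>v r j" if "j < n" for j
  proof -
    have "F *\<^sub>v r j = (F * Finv) *\<^sub>v w j" using r_eq[OF that] F_carrier Finv wc
      by (metis assoc_mult_mat_vec)
    then show ?thesis using Finv wc by auto
  qed
  have rw0: "(r j \<noteq> 0\<^sub>v n) = (w j \<noteq> 0\<^sub>v n)" if "j < n" for j
    using w_r[OF that] r_eq[OF that] F_carrier Finv by auto
  define J where "J = {j. j < n \<and> col ?R j \<noteq> 0\<^sub>v n}"
  have finJ: "finite J" unfolding J_def by auto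
  have J_iff: "j \<in> J \<longleftrightarrow> j < n \<and> w j \<noteq> 0\<^sub>v n" for j
    unfolding J_def using rw0 r_def by auto
  have Indep: "\<forall>j\<in>J. c j = 0" if c: "\<forall>i<n. (\<Sum>j\<in>J. c j * w j $ i) = 0" for c
  proof -
    have r0: "(\<Sum>j\<in>J. c j * r j $ i) = 0" if i: "i < n" for i
    proof -
      have ri: "r j $ i = (\<Sum>l\<in>{0..<n}. Finv $$ (i, l) * w j $ l)" if "j \<in> J" for j
        using that r_eq[of j] i Finv wc[of j] unfolding J_def
        by (simp add: scalar_prod_def carrier_vecD)
      have "(\<Sum>j\<in>J. c j * r j $ i) = (\<Sum>j\<in>J. \<Sum>l\<in>{0..<n}. Finv $$ (i, l) * (c j * w j $ l))"
        using ri by (simp add: sum_distrib_left mult.left_commute)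
      also have "\<dots> = (\<Sum>l\<in>{0..<n}. \<Sum>j\<in>J. Finv $$ (i, l) * (c j * w j $ l))"
        by (rule sum.swap)
      also have "\<dots> = (\<Sum>l\<in>{0..<n}. Finv $$ (i, l) * (\<Sum>j\<in>J. c j * w j $ l))"
        by (simp add: sum_distrib_left)
      also have "\<dots> = 0" using c by simp
      finally show ?thesis .
    qed
    show ?thesis
    proof (rule ccontr)
      assume "\<not> (\<forall>j\<in>J. c j = 0)"
      define K where "K = {j\<in>J. c j \<noteq> 0}"
      have Kne: "K \<noteq> {}" and finK: "finite K" using \<open>\<not> (\<forall>j\<in>J. c j = 0)\<close> finJ unfolding K_def by auto
      define m where "m = Max ((\<lambda>j. piv (r j)) ` K)"
      have "m \<in> (\<lambda>j. piv (r j)) ` K"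
        using Max_in[of "(\<lambda>j. piv (r j)) ` K"] finK Kne unfolding m_def by auto
      then obtain j0 where j0: "j0 \<in> K" "piv (r j0) = m" by auto
      have mge: "piv (r j) \<le> m" if "j \<in> K" for j
        using finK that unfolding m_def by auto
      have rnz: "r j \<noteq> 0\<^sub>v (dim_vec (r j))" if "j \<in> J" for j
        using that rc[of j] unfolding J_def using Dc by (simp add: carrier_vecD r_def)
      have dr: "dim_vec (r j) = n" for j using rc[of j] by (auto simp: carrier_vecD)
      have j0J: "j0 \<in> J" and cj0: "c j0 \<noteq> 0" using j0 unfolding K_def by auto
      have mn: "m < n" and rm: "r j0 $ m \<noteq> 0" using piv_props[OF rnz[OF j0J]] j0 dr by auto
      have other: "c j * r j $ m = 0" if "j \<in> J" "j \<noteq> j0" for j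
      proof (cases "c j = 0")
        case False
        then have jK: "j \<in> K" using that unfolding K_def by auto
        have "piv (r j) \<noteq> piv (r j0)"
          using red that j0J Rc Dc V unfolding reduced_def J_def r_def by auto
        then have "piv (r j) < m" using mge[OF jK] j0 by auto
        then have "r j $ m = 0" using piv_props(3)[OF rnz[OF that(1)], of m] mn dr by fastforce
        then show ?thesis by simp
      qed simp
      have "(\<Sum>j\<in>J. c j * r j $ m) = c j0 * r j0 $ m + (\<Sum>j\<in>J - {j0}. c j * r j $ m)"
        using finJ j0J by (simp add: sum.remove)
      also have "(\<Sum>j\<in>J - {j0}. c j * r j $ m) = 0" using other by (intro sum.neutral) auto
      finally have "(\<Sum>j\<in>J. c j * r j $ m) \<noteq> 0" using cj0 rm by simp
      then show False using r0[OF mn] by simp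
    qed
  qed
  have per_t: "(\<forall>j\<in>J. (w j \<in> (\<lambda>x. D' *\<^sub>v x) ` Cf' t) \<longleftrightarrow> col V j \<in> Cf' t)
     \<and> family_basis n ((\<lambda>x. D' *\<^sub>v x) ` Cf' t) w {j\<in>J. w j \<in> (\<lambda>x. D' *\<^sub>v x) ` Cf' t}"
    if t: "t \<le> N" for t
  proof -
    let ?B = "(\<lambda>x. D' *\<^sub>v x) ` Cf' t"
    define S where "S = {j \<in> {..<n}. unit_vec n j \<in> Cf' t}"
    have fbS: "family_basis n (Cf' t) (unit_vec n) S"
      using basC' t unfolding filt_compatible_ordered_std_basis_def filt_compatible_basis_def S_def by auto
    have down: "i \<in> S" if "i \<le> i'" "i' \<in> S" for i i'
    proof -
      have "supp N Cf' (unit_vec n i') \<subseteq> supp N Cf' (unit_vec n i)"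
        using basC' that unfolding filt_compatible_ordered_std_basis_def S_def by auto
      moreover have "t \<in> supp N Cf' (unit_vec n i')" using that t unfolding supp_def S_def by auto
      ultimately show ?thesis using that unfolding supp_def S_def by auto
    qed
    have subsp: "is_subspace n (Cf' t)" using filtC' t unfolding filtration_cc_def by auto
    have Cc: "Cf' t \<subseteq> carrier_vec n" using subsp unfolding is_subspace_def by auto
    have finS: "finite S" unfolding S_def by auto
    have memb: "x \<in> Cf' t \<longleftrightarrow> x \<in> carrier_vec n \<and> (\<forall>i<n. x $ i \<noteq> 0 \<longrightarrow> i \<in> S)" for x
    proof
      assume x: "x \<in> Cf' t"
      then obtain c where xc: "x = lin_comb n (unit_vec n) S c" using fbS unfolding family_basis_def by auto
      have "x $ i = 0" if "i < n" "i \<notin> S" for i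
        unfolding xc using that finS
        by (subst lin_comb_index) (auto simp: S_def intro!: sum.neutral)
      then show "x \<in> carrier_vec n \<and> (\<forall>i<n. x $ i \<noteq> 0 \<longrightarrow> i \<in> S)" using x Cc by auto
    next
      assume x: "x \<in> carrier_vec n \<and> (\<forall>i<n. x $ i \<noteq> 0 \<longrightarrow> i \<in> S)"
      have lcc: "lin_comb n (unit_vec n) S (\<lambda>j. x $ j) \<in> carrier_vec n"
        by (rule lin_comb_carrier[OF finS]) simp
      have xn: "dim_vec x = n" using x by (simp add: carrier_vecD)
      have "x = lin_comb n (unit_vec n) S (\<lambda>j. x $ j)"
      proof (rule eq_vecI)
        show "dim_vec x = dim_vec (lin_comb n (unit_vec n) S (\<lambda>j. x $ j))"
          using xn lcc by (simp add: carrier_vecD)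
        fix i assume "i < dim_vec (lin_comb n (unit_vec n) S (\<lambda>j. x $ j))"
        then have i: "i < n" using lcc by (simp add: carrier_vecD)
        have "lin_comb n (unit_vec n) S (\<lambda>j. x $ j) $ i = (\<Sum>j\<in>S. x $ j * unit_vec n j $ i)"
          using i finS by (subst lin_comb_index) auto
        also have "\<dots> = (\<Sum>j\<in>S. if j = i then x $ i else 0)"
          using i by (intro sum.cong) (auto simp: S_def)
        also have "\<dots> = x $ i" using finS x i by (cases "i \<in> S") (auto simp: sum.delta)
        finally show "x $ i = lin_comb n (unit_vec n) S (\<lambda>j. x $ j) $ i" by simp
      qed
      moreover have "lin_comb n (unit_vec n) S (\<lambda>j. x $ j) \<in> Cf' t"
        using lin_comb_subspace[OF subsp finS] fbS unfolding family_basis_def by auto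
      ultimately show "x \<in> Cf' t" by simp
    qed
    have colV: "col V j \<in> Cf' t \<longleftrightarrow> j \<in> S" if j: "j < n" for j
    proof
      assume "col V j \<in> Cf' t"
      moreover have "col V j $ j \<noteq> 0" using diag_nonzero[OF V j] V j by simp
      ultimately show "j \<in> S" using memb[of "col V j"] j by blast
    next
      assume jS: "j \<in> S"
      have isS: "i \<in> S" if "i < n" "col V j $ i \<noteq> 0" for i
      proof -
        have "V $$ (i, j) \<noteq> 0" using that V(1) j by simp
        then have "i \<le> j"
        proof (rule contrapos_np)
          assume "\<not> i \<le> j"
          then show "V $$ (i, j) = 0" using upper_triangularD[OF V(3)] V(1) that by simp
        qed
        then show ?thesis by (rule down[OF _ jS])
      qed
      have cvc: "col V j \<in> carrier_vec n" using V(1) by (metis carrier_matD(1) col_dim)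
      show "col V j \<in> Cf' t"
        by (rule memb[THEN iffD2], rule conjI, rule cvc, intro allI impI, rule isS)
    qed
    have span: "\<exists>z. \<forall>i<n. (D' *\<^sub>v x) $ i = (\<Sum>l\<in>J \<inter> S. z l * w l $ i)" if x: "x \<in> Cf' t" for x
    proof -
      obtain W where W: "W \<in> carrier_mat n n" "V * W = 1\<^sub>m n" using inv_obtain[OF V(1,2)] by metis
      have xc: "x \<in> carrier_vec n" using x Cc by blast
      define z where "z = W *\<^sub>v x"
      have zc: "z \<in> carrier_vec n" unfolding z_def using W(1) xc by simp
      have "V *\<^sub>v z = (V * W) *\<^sub>v x" unfolding z_def using V(1) W(1) xc by (metis assoc_mult_mat_vec)
      then have Vz: "V *\<^sub>v z = x" using W(2) xc by simp
      have xS: "x $ i = 0" if "i < n" "i \<notin> S" for i using memb[of x] x that by blast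
      have zS: "z $ i = 0" if "i < n" "i \<notin> S" for i
        using that
      proof (induction "n - i" arbitrary: i rule: less_induct)
        case less
        have hi: "z $ l = 0" if "i < l" "l < n" for l
        proof -
          have "l \<notin> S" using down[of i l] less.prems that by auto
          then show ?thesis using less.hyps[of l] that less.prems by auto
        qed
        have "x $ i = (V *\<^sub>v z) $ i" using Vz by simp
        also have "\<dots> = (\<Sum>l\<in>{0..<n}. V $$ (i, l) * z $ l)"
          using V(1) zc less.prems by (simp add: scalar_prod_def carrier_vecD)
        also have "\<dots> = V $$ (i, i) * z $ i + (\<Sum>l\<in>{0..<n} - {i}. V $$ (i, l) * z $ l)"
          using less.prems by (simp add: sum.remove)
        also have "(\<Sum>l\<in>{0..<n} - {i}. V $$ (i, l) * z $ l) = 0"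
        proof (rule sum.neutral, rule ballI)
          fix l assume l: "l \<in> {0..<n} - {i}"
          show "V $$ (i, l) * z $ l = 0"
          proof (cases "l < i")
            case True
            then have "V $$ (i, l) = 0" using upper_triangularD[OF V(3)] V(1) less.prems by simp
            then show ?thesis by simp
          next
            case False
            then have "z $ l = 0" using hi l by simp
            then show ?thesis by simp
          qed
        qed
        finally have "V $$ (i, i) * z $ i = x $ i" by simp
        then have "V $$ (i, i) * z $ i = 0" using xS less.prems by simp
        then show ?case using diag_nonzero[OF V less.prems(1)] by simp
      qed
      have "(D' *\<^sub>v x) $ i = (\<Sum>l\<in>J \<inter> S. z $ l * w l $ i)" if i: "i < n" for i
      proof -
        have e: "D' *\<^sub>v x = (D' * V) *\<^sub>v z" using Vz D'c V(1) zc by (metis assoc_mult_mat_vec)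
        have "(D' *\<^sub>v x) $ i = row (D' * V) i \<bullet> z"
          unfolding e using D'c V(1) i by (simp del: assoc_mult_mat_vec)
        also have "\<dots> = (\<Sum>l\<in>{0..<n}. row (D' * V) i $ l * z $ l)"
          using zc by (simp add: scalar_prod_def carrier_vecD)
        also have "\<dots> = (\<Sum>l\<in>{0..<n}. z $ l * w l $ i)"
        proof (rule sum.cong[OF refl])
          fix l assume "l \<in> {0..<n}"
          then have "row (D' * V) i $ l = (D' * V) $$ (i, l)" "w l $ i = (D' * V) $$ (i, l)"
            using D'c V(1) i unfolding w_def by simp_all
          then show "row (D' * V) i $ l * z $ l = z $ l * w l $ i" by simp
        qed
        also have "\<dots> = (\<Sum>l\<in>J \<inter> S. z $ l * w l $ i)"
        proof (rule sum.mono_neutral_right)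
          show "finite {0..<n}" by simp
          show "J \<inter> S \<subseteq> {0..<n}" unfolding J_def by auto
          show "\<forall>l\<in>{0..<n} - J \<inter> S. z $ l * w l $ i = 0"
          proof
            fix l assume l: "l \<in> {0..<n} - J \<inter> S"
            show "z $ l * w l $ i = 0"
            proof (cases "l \<in> S")
              case True
              then have "l \<notin> J" using l by simp
              then have "w l = 0\<^sub>v n" using J_iff[of l] l by simp
              then show ?thesis using i by simp
            next
              case False
              then show ?thesis using zS[of l] l by simp
            qed
          qed
        qed
        finally show ?thesis .
      qed
      then show ?thesis by blast
    qed
    have Jn: "j < n" if "j \<in> J" for j using that unfolding J_def by simp
    have wB: "w j \<in> ?B \<longleftrightarrow> j \<in> S" if j: "j \<in> J" for j
    proof
      assume jS: "j \<in> S"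
      have "col V j \<in> Cf' t" using colV[OF Jn[OF j]] jS by simp
      then show "w j \<in> ?B" using w_eq[OF Jn[OF j]] by blast
    next
      assume "w j \<in> ?B"
      then obtain x where x: "x \<in> Cf' t" "w j = D' *\<^sub>v x" by blast
      obtain z where z: "\<forall>i<n. (D' *\<^sub>v x) $ i = (\<Sum>l\<in>J \<inter> S. z l * w l $ i)" using span[OF x(1)] by blast
      show "j \<in> S"
      proof (rule ccontr)
        assume jS: "j \<notin> S"
        define c where "c l = (if l = j then -1 else if l \<in> S then z l else 0)" for l
        have "\<forall>i<n. (\<Sum>l\<in>J. c l * w l $ i) = 0"
        proof (intro allI impI)
          fix i assume i: "i < n"
          have "(\<Sum>l\<in>J. c l * w l $ i) = (\<Sum>l\<in>J. (if l = j then - w l $ i else 0) + (if l \<in> S then z l * w l $ i else 0))"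
            using jS unfolding c_def by (intro sum.cong) auto
          also have "\<dots> = (\<Sum>l\<in>J. (if l = j then - w l $ i else 0)) + (\<Sum>l\<in>J. (if l \<in> S then z l * w l $ i else 0))"
            by (rule sum.distrib)
          also have "(\<Sum>l\<in>J. (if l = j then - w l $ i else 0)) = - w j $ i"
            using finJ j by (simp add: sum.delta)
          also have "(\<Sum>l\<in>J. (if l \<in> S then z l * w l $ i else 0)) = (\<Sum>l\<in>J \<inter> S. z l * w l $ i)"
            using finJ by (simp add: sum.inter_restrict)
          also have "\<dots> = w j $ i" using z i x(2) by simp
          finally show "(\<Sum>l\<in>J. c l * w l $ i) = 0" by simp
        qed
        then have "c j = 0" using Indep j by blast
        then show False unfolding c_def by simp
      qed
    qed
    let ?Jt = "{j \<in> J. w j \<in> ?B}"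
    have Jt: "?Jt = J \<inter> S" using wB by blast
    have finJt: "finite ?Jt" using finJ by simp
    have fb: "family_basis n ?B w ?Jt"
      unfolding family_basis_def
    proof (intro conjI ballI allI impI)
      show "finite ?Jt" by (rule finJt)
    next
      fix j assume "j \<in> ?Jt" then show "w j \<in> ?B" by simp
    next
      fix c j assume lc: "lin_comb n w ?Jt c = 0\<^sub>v n" and j: "j \<in> ?Jt"
      define c' where "c' l = (if l \<in> ?Jt then c l else 0)" for l
      have "\<forall>i<n. (\<Sum>l\<in>J. c' l * w l $ i) = 0"
      proof (intro allI impI)
        fix i assume i: "i < n"
        have "(\<Sum>l\<in>J. c' l * w l $ i) = (\<Sum>l\<in>J. if l \<in> ?Jt then c l * w l $ i else 0)"
          unfolding c'_def by (intro sum.cong) auto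
        also have "\<dots> = (\<Sum>l\<in>J \<inter> ?Jt. c l * w l $ i)"
          using finJ by (simp add: sum.inter_restrict)
        also have "J \<inter> ?Jt = ?Jt" by blast
        also have "(\<Sum>l\<in>?Jt. c l * w l $ i) = lin_comb n w ?Jt c $ i"
          using finJt i wc by (subst lin_comb_index) auto
        also have "\<dots> = 0" using lc i by simp
        finally show "(\<Sum>l\<in>J. c' l * w l $ i) = 0" .
      qed
      then have "c' j = 0" using Indep j by blast
      then show "c j = 0" using j unfolding c'_def by simp
    next
      fix y assume "y \<in> ?B"
      then obtain x where x: "x \<in> Cf' t" "y = D' *\<^sub>v x" by blast
      obtain z where z: "\<forall>i<n. (D' *\<^sub>v x) $ i = (\<Sum>l\<in>J \<inter> S. z l * w l $ i)" using span[OF x(1)] by blast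
      have lcc: "lin_comb n w ?Jt z \<in> carrier_vec n" by (rule lin_comb_carrier[OF finJt wc])
      have "y = lin_comb n w ?Jt z"
      proof (rule eq_vecI)
        show "dim_vec y = dim_vec (lin_comb n w ?Jt z)" using lcc x(2) D'c by (simp add: carrier_vecD)
        fix i assume "i < dim_vec (lin_comb n w ?Jt z)"
        then have i: "i < n" using lcc by (simp add: carrier_vecD)
        have "lin_comb n w ?Jt z $ i = (\<Sum>l\<in>?Jt. z l * w l $ i)"
          using finJt i wc by (subst lin_comb_index) auto
        also have "\<dots> = (\<Sum>l\<in>J \<inter> S. z l * w l $ i)" unfolding Jt ..
        also have "\<dots> = y $ i" using z i x(2) by simp
        finally show "y $ i = lin_comb n w ?Jt z $ i" by simp
      qed
      then show "\<exists>c. y = lin_comb n w ?Jt c" by blast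
    qed
    have "\<forall>j\<in>J. (w j \<in> ?B) \<longleftrightarrow> col V j \<in> Cf' t"
      using wB colV Jn by blast
    then show ?thesis using fb by blast
  qed
  have wdef': "col (D' * V) = w" by (rule ext) (simp add: w_def)
  show ?thesis
    unfolding FR wdef' J_def[symmetric] filt_compatible_basis_def supp_def
  proof (intro conjI allI impI)
    fix t assume "t \<le> N"
    then show "family_basis n ((\<lambda>x. D' *\<^sub>v x) ` Cf' t) w {j \<in> J. w j \<in> (\<lambda>x. D' *\<^sub>v x) ` Cf' t}"
      using per_t by blast
  next
    fix j assume j: "j < n" "col ?R j \<noteq> 0\<^sub>v n"
    then have jJ: "j \<in> J" unfolding J_def by simp
    show "{t. t \<le> N \<and> w j \<in> (\<lambda>x. D' *\<^sub>v x) ` Cf' t} = {t. t \<le> N \<and> col V j \<in> Cf' t}"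
      using per_t jJ by blast
  qed
qed

end
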